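(* Let $d,r$ be positive integers with $d\le q$ and $r\le\binom{m+d}{d}$. If $r<\binom{m+d}{d}$, let $i,j$ be the unique integers with $r=j+\sum_{a=1}^{i}\binom{m+d-a}{d-1}$, $0\le i\le m$ and $0\le j<\binom{m+d-i-1}{d-1}$; if $r=\binom{m+d}{d}$, let $i=m$ and $j=1$. Then $$e_r(d,m)\ge H_j(d-1,m-i)+\mathsf{p}_{m-i-1}.$$
   Context: Let $q$ be a prime power, $\mathbb{F}_q$ the finite field with $q$ elements, $m$ a positive integer. For $j\in\mathbb{Z}$, $\mathsf{p}_j=q^j+\dots+q+1$ if $j\ge0$ and $\mathsf{p}_j=0$ if $j<0$. $e_r(d,m)$ is the maximum, over all families of $r$ linearly independent homogeneous polynomials $F_1,\dots,F_r$ of degree $d$ in $\mathbb{F}_q[x_0,\dots,x_m]$, of the number of points of $\mathbb{P}^m(\mathbb{F}_q)$ at which all $F_i$ vanish. For nonnegative integers $d,n$ and $1\le s\le\binom{n+d}{n}$ (with $n\ge1$, $d\ge 1$, $d<q$): $H_s(d,n)=\sum_{k=1}^{n}\alpha_kq^{n-k}$, where $(\alpha_1,\dots,\alpha_n)$ is the $s$-th element, in descending lexicographic order, of the set of $n$-tuples of integers $(\beta_1,\dots,\beta_n)$ with $0\le\beta_k<q$ and $\beta_1+\dots+\beta_n\le d$. Conventions: $H_0(d,n)=q^n$ for all $d,n\ge0$, and $H_1(d,n)=0$ if $d=0$ or $n=0$. *)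

theory Defs
  imports Main
begin

text \<open>Field F_q is modelled by a finite field type 'k; q = CARD('k).
Points of F_q^(m+1) are functions nat => 'k vanishing outside {0..m}.
A monomial of degree d in x_0..x_m is an exponent vector a : nat => nat
supported on {0..m} with total degree d.\<close>

definition mons :: "nat \<Rightarrow> nat \<Rightarrow> (nat \<Rightarrow> nat) set" where
  "mons m d = {a. (\<forall>i>m. a i = 0) \<and> (\<Sum>i\<le>m. a i) = d}"

definition hom_polys :: "nat \<Rightarrow> nat \<Rightarrow> ((nat \<Rightarrow> nat) \<Rightarrow> 'k::field) set" where
  "hom_polys m d = {c. \<forall>a. a \<notin> mons m d \<longrightarrow> c a = 0}"

definition peval :: "nat \<Rightarrow> nat \<Rightarrow> ((nat \<Rightarrow> nat) \<Rightarrow> 'k::field) \<Rightarrow> (nat \<Rightarrow> 'k) \<Rightarrow> 'k" where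
  "peval m d c x = (\<Sum>a\<in>mons m d. c a * (\<Prod>i\<le>m. x i ^ a i))"

definition proj_pts :: "nat \<Rightarrow> (nat \<Rightarrow> 'k::field) set set" where
  "proj_pts m = (\<lambda>x. {(\<lambda>i. c * x i) | c. c \<noteq> 0}) `
      {x. (\<forall>i>m. x i = 0) \<and> (\<exists>i\<le>m. x i \<noteq> 0)}"

definition lin_indep :: "nat \<Rightarrow> (nat \<Rightarrow> ((nat \<Rightarrow> nat) \<Rightarrow> 'k::field)) \<Rightarrow> bool" where
  "lin_indep r F = (\<forall>c :: nat \<Rightarrow> 'k. (\<forall>a. (\<Sum>l<r. c l * F l a) = 0) \<longrightarrow> (\<forall>l<r. c l = 0))"

definition n_zeros :: "nat \<Rightarrow> nat \<Rightarrow> nat \<Rightarrow> (nat \<Rightarrow> ((nat \<Rightarrow> nat) \<Rightarrow> 'k::field)) \<Rightarrow> nat" where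
  "n_zeros r d m F = card {P \<in> proj_pts m. \<forall>x\<in>P. \<forall>l<r. peval m d (F l) x = 0}"

definition e_max :: "'k::{finite,field} itself \<Rightarrow> nat \<Rightarrow> nat \<Rightarrow> nat \<Rightarrow> nat" where
  "e_max TYPE('k) r d m = Max {n_zeros r d m F | F :: nat \<Rightarrow> ((nat \<Rightarrow> nat) \<Rightarrow> 'k).
       (\<forall>l<r. F l \<in> hom_polys m d) \<and> lin_indep r F}"

definition tuples :: "nat \<Rightarrow> nat \<Rightarrow> nat \<Rightarrow> nat list set" where
  "tuples q d n = {b. length b = n \<and> (\<forall>x\<in>set b. x < q) \<and> sum_list b \<le> d}"

definition lex_gt :: "nat list \<Rightarrow> nat list \<Rightarrow> bool" where
  "lex_gt g b = ((b, g) \<in> lexord {(x, y). x < y})"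

text \<open>s-th element (1-based) in descending lexicographic order.\<close>
definition nth_desc :: "nat \<Rightarrow> nat \<Rightarrow> nat \<Rightarrow> nat \<Rightarrow> nat list" where
  "nth_desc q d n s = (THE b. b \<in> tuples q d n \<and> card {g \<in> tuples q d n. lex_gt g b} = s - 1)"

definition H :: "nat \<Rightarrow> nat \<Rightarrow> nat \<Rightarrow> nat \<Rightarrow> nat" where
  "H q s d n = (if s = 0 then q ^ n
     else if s = 1 \<and> (d = 0 \<or> n = 0) then 0
     else (let al = nth_desc q d n s in \<Sum>k<n. al ! k * q ^ (n - 1 - k)))"

definition pp :: "nat \<Rightarrow> int \<Rightarrow> nat" where
  "pp q j = (if j < 0 then 0 else \<Sum>k\<le>nat j. q ^ k)"

end

theory Submission
  imports Defs "HOL-Library.List_Lexorder"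
begin

definition monom :: "nat \<Rightarrow> (nat \<Rightarrow> nat) \<Rightarrow> (nat \<Rightarrow> 'k::field) \<Rightarrow> 'k" where
  "monom m a x = (\<Prod>t\<le>m. x t ^ a t)"

definition repr :: "nat \<Rightarrow> nat \<Rightarrow> ((nat \<Rightarrow> 'k::field) \<Rightarrow> 'k) \<Rightarrow> bool" where
  "repr m d f = (\<exists>c \<in> hom_polys m d. \<forall>x. peval m d c x = f x)"

lemma finite_mons: "finite (mons m d)"
proof -
  have "mons m d \<subseteq> {f. \<forall>x. (x \<in> {..m} \<longrightarrow> f x \<in> {..d}) \<and> (x \<notin> {..m} \<longrightarrow> f x = 0)}"
  proof
    fix a assume a: "a \<in> mons m d"
    have "a t \<le> d" if "t \<le> m" for t
      using a that member_le_sum[of t "{..m}" a] unfolding mons_def by auto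
    then show "a \<in> {f. \<forall>x. (x \<in> {..m} \<longrightarrow> f x \<in> {..d}) \<and> (x \<notin> {..m} \<longrightarrow> f x = 0)}"
      using a unfolding mons_def by auto
  qed
  then show ?thesis by (rule finite_subset) (rule finite_set_of_finite_funs; simp)
qed

lemma peval_scale: "peval m d c (\<lambda>t. s * x t) = s ^ d * peval m d c x"
proof -
  have "c a * (\<Prod>t\<le>m. (s * x t) ^ a t) = s ^ d * (c a * (\<Prod>t\<le>m. x t ^ a t))"
    if "a \<in> mons m d" for a
  proof -
    have "(\<Prod>t\<le>m. (s * x t) ^ a t) = (\<Prod>t\<le>m. s ^ a t) * (\<Prod>t\<le>m. x t ^ a t)"
      by (simp add: power_mult_distrib prod.distrib)
    also have "(\<Prod>t\<le>m. s ^ a t) = s ^ d"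
      using that unfolding mons_def by (simp add: power_sum[symmetric])
    finally show ?thesis by simp
  qed
  then show ?thesis unfolding peval_def sum_distrib_left by (rule sum.cong[OF refl])
qed

lemma repr_add: "repr m d f \<Longrightarrow> repr m d g \<Longrightarrow> repr m d (\<lambda>x. f x + g x)"
  unfolding repr_def hom_polys_def
  apply clarify
  subgoal for c c'
    apply (rule bexI[of _ "\<lambda>a. c a + c' a"])
     apply (auto simp: peval_def distrib_right sum.distrib)
    done
  done

lemma repr_smult: "repr m d f \<Longrightarrow> repr m d (\<lambda>x. s * f x)"
  unfolding repr_def hom_polys_def
  apply clarify
  subgoal for c
    apply (rule bexI[of _ "\<lambda>a. s * c a"])
     apply (auto simp: peval_def sum_distrib_left[symmetric] mult.assoc)
    done
  done

lemma repr_zero: "repr m d (\<lambda>x. 0)"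
  unfolding repr_def hom_polys_def
  by (rule bexI[of _ "\<lambda>a. 0"]) (auto simp: peval_def)

lemma repr_sum: "finite A \<Longrightarrow> (\<And>a. a \<in> A \<Longrightarrow> repr m d (g a)) \<Longrightarrow> repr m d (\<lambda>x. \<Sum>a\<in>A. g a x)"
proof (induction A rule: finite_induct)
  case empty then show ?case by (simp add: repr_zero)
next
  case (insert a A) then show ?case by (simp add: repr_add)
qed

lemma peval_delta: "a \<in> mons m d \<Longrightarrow> peval m d (\<lambda>b. if b = a then 1 else 0) x = monom m a x"
proof -
  assume a: "a \<in> mons m d"
  have "peval m d (\<lambda>b. if b = a then 1 else 0) x = (\<Sum>b\<in>mons m d. if b = a then monom m b x else 0)"
    unfolding peval_def monom_def by (rule sum.cong) auto
  then show ?thesis using a by (simp add: finite_mons)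
qed

lemma delta_hom: "a \<in> mons m d \<Longrightarrow> (\<lambda>b. if b = a then 1 else 0) \<in> hom_polys m d"
  unfolding hom_polys_def by auto

lemma repr_mono: "a \<in> mons m d \<Longrightarrow> repr m d (monom m a)"
  unfolding repr_def using peval_delta delta_hom by blast

lemma monom_upd: "u \<le> m \<Longrightarrow> monom m (a(u := Suc (a u))) x = x u * monom m a x"
proof -
  assume u: "u \<le> m"
  have "monom m (a(u := Suc (a u))) x = (\<Prod>t\<le>m. (if t = u then x t else 1) * x t ^ a t)"
    unfolding monom_def by (rule prod.cong) auto
  also have "\<dots> = (\<Prod>t\<le>m. (if t = u then x t else 1)) * monom m a x"
    unfolding monom_def by (simp add: prod.distrib)
  also have "(\<Prod>t\<le>m. (if t = u then x t else 1)) = x u"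
    using u by (simp add: prod.delta)
  finally show ?thesis .
qed

lemma mons_upd: "a \<in> mons m d \<Longrightarrow> u \<le> m \<Longrightarrow> a(u := Suc (a u)) \<in> mons m (Suc d)"
proof -
  assume a: "a \<in> mons m d" and u: "u \<le> m"
  have "(\<Sum>t\<le>m. (a(u := Suc (a u))) t) = (\<Sum>t\<le>m. (if t = u then 1 else 0) + a t)"
    by (rule sum.cong) auto
  also have "\<dots> = 1 + d" using a u unfolding mons_def by (simp add: sum.distrib)
  finally show ?thesis using a u unfolding mons_def by auto
qed

lemma repr_var: "repr m d f \<Longrightarrow> u \<le> m \<Longrightarrow> repr m (Suc d) (\<lambda>x. x u * f x)"
proof -
  assume f: "repr m d f" and u: "u \<le> m"
  then obtain c where c: "\<And>x. peval m d c x = f x" unfolding repr_def by blast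
  have eq: "x u * f x = (\<Sum>a\<in>mons m d. c a * monom m (a(u := Suc (a u))) x)" for x
    unfolding c[symmetric] peval_def 
    by (simp add: sum_distrib_left monom_def[symmetric] mult.left_commute del: fun_upd_apply)
      (rule sum.cong[OF refl], simp add: monom_upd[OF u] del: fun_upd_apply)
  have "repr m (Suc d) (\<lambda>x. \<Sum>a\<in>mons m d. c a * monom m (a(u := Suc (a u))) x)"
    by (rule repr_sum[OF finite_mons]) (intro repr_smult repr_mono mons_upd u; assumption)
  then show ?thesis by (simp add: eq)
qed

lemma repr_one: "repr m 0 (\<lambda>x. 1)"
proof -
  have "(\<lambda>_. 0) \<in> mons m 0" unfolding mons_def by auto
  from repr_mono[OF this] show ?thesis by (simp add: monom_def[abs_def])
qed

lemma repr_lin: "repr m d f \<Longrightarrow> u \<le> m \<Longrightarrow> v \<le> m \<Longrightarrow> repr m (Suc d) (\<lambda>x. (x u - s * x v) * f x)"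
proof -
  assume "repr m d f" "u \<le> m" "v \<le> m"
  then have "repr m (Suc d) (\<lambda>x. x u * f x + (- s) * (x v * f x))"
    by (intro repr_add repr_smult repr_var)
  then show ?thesis by (simp add: algebra_simps)
qed



fun lfr :: "nat \<Rightarrow> nat list \<Rightarrow> (nat \<times> nat) list" where
  "lfr u [] = []"
| "lfr u (b # bs) = map (\<lambda>t. (u, t)) [0..<b] @ lfr (Suc u) bs"

lemma length_lfr: "length (lfr u bs) = sum_list bs"
  by (induction bs arbitrary: u) auto

lemma set_lfr: "(v, t) \<in> set (lfr u bs) \<longleftrightarrow> (\<exists>k<length bs. v = u + k \<and> t < bs ! k)"
proof (induction bs arbitrary: u)
  case Nil then show ?case by simp
next
  case (Cons b bs)
  show ?case
  proof
    assume "(v, t) \<in> set (lfr u (b # bs))"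
    then have "(v = u \<and> t < b) \<or> (v, t) \<in> set (lfr (Suc u) bs)" by auto
    then show "\<exists>k<length (b # bs). v = u + k \<and> t < (b # bs) ! k"
    proof
      assume "v = u \<and> t < b" then show ?thesis by (intro exI[of _ 0]) auto
    next
      assume "(v, t) \<in> set (lfr (Suc u) bs)"
      then obtain k where "k < length bs" "v = Suc u + k" "t < bs ! k" using Cons by auto
      then show ?thesis by (intro exI[of _ "Suc k"]) auto
    qed
  next
    assume "\<exists>k<length (b # bs). v = u + k \<and> t < (b # bs) ! k"
    then obtain k where k: "k < length (b # bs)" "v = u + k" "t < (b # bs) ! k" by blast
    show "(v, t) \<in> set (lfr u (b # bs))"
    proof (cases k)
      case 0 then show ?thesis using k by auto
    next
      case (Suc k')
      then have "(v, t) \<in> set (lfr (Suc u) bs)" using Cons k by auto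
      then show ?thesis by simp
    qed
  qed
qed

definition Gfun :: "(nat \<Rightarrow> 'k::field) \<Rightarrow> nat \<Rightarrow> nat \<Rightarrow> nat list \<Rightarrow> (nat \<Rightarrow> 'k) \<Rightarrow> 'k" where
  "Gfun a i d \<beta> x = x i ^ (d - sum_list \<beta>) * prod_list (map (\<lambda>(v, t). x v - a t * x i) (lfr (Suc i) \<beta>))"

lemma repr_prod_list:
  assumes "\<forall>(v, t) \<in> set L. v \<le> m" "i \<le> m"
  shows "repr m (length L) (\<lambda>x. prod_list (map (\<lambda>(v, t). x v - (a t :: 'k::field) * x i) L))"
  using assms
proof (induction L)
  case Nil then show ?case by (simp add: repr_one)
next
  case (Cons p L)
  obtain v t where p: "p = (v, t)" by force
  have "repr m (Suc (length L)) (\<lambda>x. (x v - a t * x i) * prod_list (map (\<lambda>(v, t). x v - a t * x i) L))"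
    using Cons p by (intro repr_lin) auto
  then show ?case using p by simp
qed

lemma repr_pow: "repr m k g \<Longrightarrow> i \<le> m \<Longrightarrow> repr m (e + k) (\<lambda>x. x i ^ e * g x)"
proof (induction e)
  case 0 then show ?case by simp
next
  case (Suc e)
  then have "repr m (Suc (e + k)) (\<lambda>x. x i * (x i ^ e * g x))" by (intro repr_var) auto
  then show ?case by (simp add: mult.assoc)
qed

lemma repr_G:
  assumes "i + length \<beta> \<le> m" "sum_list \<beta> \<le> d"
  shows "repr m d (Gfun (a :: nat \<Rightarrow> 'k::field) i d \<beta>)"
proof -
  have "\<forall>(v, t) \<in> set (lfr (Suc i) \<beta>). v \<le> m"
    using assms(1) by (auto simp: set_lfr)
  from repr_pow[OF repr_prod_list[OF this, where a=a and i=i], where e="d - sum_list \<beta>" and i=i] assms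
  show ?thesis unfolding Gfun_def[abs_def] by (simp add: length_lfr)
qed

definition pt :: "(nat \<Rightarrow> 'k::field) \<Rightarrow> nat \<Rightarrow> nat \<Rightarrow> nat list \<Rightarrow> nat \<Rightarrow> 'k" where
  "pt a i m c = (\<lambda>t. if t < i then 0 else if t = i then 1 else if t \<le> m then a (c ! (t - Suc i)) else 0)"

lemma G_pt:
  assumes inj: "inj_on a {..<Q}" and im: "i \<le> m"
    and c: "length c = m - i" "\<forall>x\<in>set c. x < Q"
    and b: "length \<beta> = m - i" "\<forall>x\<in>set \<beta>. x < Q"
  shows "Gfun a i d \<beta> (pt a i m c) = 0 \<longleftrightarrow> (\<exists>k < m - i. c ! k < \<beta> ! k)"
proof -
  have "Gfun a i d \<beta> (pt a i m c) = 0 \<longleftrightarrow>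
     (\<exists>(v, t) \<in> set (lfr (Suc i) \<beta>). pt a i m c v - a t = 0)"
  proof -
    have "pt a i m c i = 1" by (simp add: pt_def)
    then show ?thesis unfolding Gfun_def by (force simp: prod_list_zero_iff)
  qed
  also have "\<dots> \<longleftrightarrow> (\<exists>k < m - i. \<exists>t < \<beta> ! k. a (c ! k) = a t)"
  proof
    assume "\<exists>(v, t) \<in> set (lfr (Suc i) \<beta>). pt a i m c v - a t = 0"
    then obtain v t where "(v, t) \<in> set (lfr (Suc i) \<beta>)" "pt a i m c v = a t" by auto
    then obtain k where k: "k < m - i" "v = Suc i + k" "t < \<beta> ! k" "pt a i m c v = a t"
      using b by (auto simp: set_lfr)
    moreover have "Suc (i + k) \<le> m" using k(1) by arith
    ultimately have "pt a i m c v = a (c ! k)" by (auto simp: pt_def)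
    then show "\<exists>k < m - i. \<exists>t < \<beta> ! k. a (c ! k) = a t" using k by metis
  next
    assume "\<exists>k < m - i. \<exists>t < \<beta> ! k. a (c ! k) = a t"
    then obtain k t where k: "k < m - i" "t < \<beta> ! k" "a (c ! k) = a t" by blast
    then have "(Suc i + k, t) \<in> set (lfr (Suc i) \<beta>)" using b by (auto simp: set_lfr)
    moreover have "Suc (i + k) \<le> m" using k(1) by arith
    then have "pt a i m c (Suc i + k) = a t" using k by (simp add: pt_def)
    ultimately show "\<exists>(v, t) \<in> set (lfr (Suc i) \<beta>). pt a i m c v - a t = 0" by force
  qed
  also have "\<dots> \<longleftrightarrow> (\<exists>k < m - i. c ! k < \<beta> ! k)"
  proof -
    have "(\<exists>t < \<beta> ! k. a (c ! k) = a t) \<longleftrightarrow> c ! k < \<beta> ! k" if "k < m - i" for k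
    proof -
      have "c ! k < Q" "\<beta> ! k < Q" using c b that by auto
      then have "a (c ! k) = a t \<longleftrightarrow> c ! k = t" if "t < \<beta> ! k" for t
        using inj that by (auto dest: inj_onD)
      then show ?thesis by auto
    qed
    then show ?thesis by auto
  qed
  finally show ?thesis .
qed

lemma G_hyper: "x i = 0 \<Longrightarrow> sum_list \<beta> < d \<Longrightarrow> Gfun a i d \<beta> x = 0"
  unfolding Gfun_def by simp



definition cls :: "(nat \<Rightarrow> 'k::field) \<Rightarrow> (nat \<Rightarrow> 'k) set" where
  "cls x = {(\<lambda>i. c * x i) | c. c \<noteq> 0}"

definition normd :: "(nat \<Rightarrow> 'k::field) \<Rightarrow> bool" where
  "normd x = (\<exists>k. x k = 1 \<and> (\<forall>t<k. x t = 0))"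

lemma cls_self: "x \<in> cls x"
  unfolding cls_def by (rule CollectI, rule exI[of _ 1]) auto

lemma normd_eq:
  assumes x: "normd x" and y: "normd y" and s: "y = (\<lambda>t. s * x t)"
  shows "y = x"
proof -
  obtain k where k: "x k = 1" "\<forall>t<k. x t = 0" using x unfolding normd_def by blast
  obtain k' where k': "y k' = 1" "\<forall>t<k'. y t = 0" using y unfolding normd_def by blast
  have "k = k'"
  proof (rule ccontr)
    assume "k \<noteq> k'"
    then consider "k < k'" | "k' < k" by linarith
    then show False
    proof cases
      case 1
      then have "s = 0" using k k' s by (metis mult.right_neutral)
      then show False using k' s by simp
    next
      case 2
      then show False using k k' s by (metis mult_zero_right zero_neq_one)
    qed
  qed
  then have "s = 1" using k k' s by (metis mult.right_neutral)
  then show ?thesis using s by simp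
qed

lemma cls_inj: "normd x \<Longrightarrow> normd y \<Longrightarrow> cls x = cls y \<Longrightarrow> x = y"
proof -
  assume "normd x" "normd y" "cls x = cls y"
  then have "y \<in> cls x" using cls_self by metis
  then obtain s where "y = (\<lambda>t. s * x t)" unfolding cls_def by blast
  then show "x = y" using normd_eq \<open>normd x\<close> \<open>normd y\<close> by metis
qed

lemma finite_vecs: "finite {x :: nat \<Rightarrow> 'k::{finite,zero}. \<forall>i>m. x i = 0}"
proof -
  have "{x :: nat \<Rightarrow> 'k. \<forall>i>m. x i = 0} \<subseteq> {f. \<forall>x. (x \<in> {..m} \<longrightarrow> f x \<in> UNIV) \<and> (x \<notin> {..m} \<longrightarrow> f x = 0)}"
    by auto
  then show ?thesis by (rule finite_subset) (rule finite_set_of_finite_funs; simp)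
qed

lemma finite_proj: "finite (proj_pts m :: (nat \<Rightarrow> 'k::{finite,field}) set set)"
proof -
  have "{x :: nat \<Rightarrow> 'k. (\<forall>i>m. x i = 0) \<and> (\<exists>i\<le>m. x i \<noteq> 0)} \<subseteq> {x. \<forall>i>m. x i = 0}" by auto
  then have "finite {x :: nat \<Rightarrow> 'k. (\<forall>i>m. x i = 0) \<and> (\<exists>i\<le>m. x i \<noteq> 0)}"
    using finite_vecs finite_subset by blast
  then show ?thesis unfolding proj_pts_def by simp
qed

lemma nz_lower:
  fixes F :: "nat \<Rightarrow> (nat \<Rightarrow> nat) \<Rightarrow> 'k::{finite,field}"
  assumes V: "\<And>x. x \<in> V \<Longrightarrow> (\<forall>t>m. x t = 0) \<and> (\<exists>t\<le>m. x t \<noteq> 0) \<and> normd x \<and> (\<forall>l<r. peval m d (F l) x = 0)"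
  shows "card V \<le> n_zeros r d m F"
proof -
  have sub: "cls ` V \<subseteq> {P \<in> proj_pts m. \<forall>x\<in>P. \<forall>l<r. peval m d (F l) x = 0}"
  proof
    fix P assume "P \<in> cls ` V"
    then obtain x where x: "x \<in> V" "P = cls x" by blast
    have "P \<in> proj_pts m" using V[OF x(1)] x(2) unfolding proj_pts_def cls_def by blast
    moreover have "\<forall>y\<in>P. \<forall>l<r. peval m d (F l) y = 0"
      using V[OF x(1)] x(2) unfolding cls_def by (auto simp: peval_scale)
    ultimately show "P \<in> {P \<in> proj_pts m. \<forall>x\<in>P. \<forall>l<r. peval m d (F l) x = 0}" by blast
  qed
  have "inj_on cls V" using V cls_inj by (metis inj_onI)
  then have "card V = card (cls ` V)" by (simp add: card_image)
  also have "\<dots> \<le> n_zeros r d m F" unfolding n_zeros_def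
    by (rule card_mono[OF _ sub]) (rule finite_subset[OF _ finite_proj[of m]], blast)
  finally show ?thesis .
qed

lemma emax_lower:
  fixes F :: "nat \<Rightarrow> (nat \<Rightarrow> nat) \<Rightarrow> 'k::{finite,field}"
  assumes "\<forall>l<r. F l \<in> hom_polys m d" "lin_indep r F"
  shows "n_zeros r d m F \<le> e_max TYPE('k) r d m"
proof -
  let ?S = "{n_zeros r d m F | F :: nat \<Rightarrow> ((nat \<Rightarrow> nat) \<Rightarrow> 'k). (\<forall>l<r. F l \<in> hom_polys m d) \<and> lin_indep r F}"
  have "?S \<subseteq> {..card (proj_pts m :: (nat \<Rightarrow> 'k) set set)}"
  proof
    fix n assume "n \<in> ?S"
    then obtain G :: "nat \<Rightarrow> ((nat \<Rightarrow> nat) \<Rightarrow> 'k)" where "n = n_zeros r d m G" by blast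
    then have "n \<le> card (proj_pts m :: (nat \<Rightarrow> 'k) set set)"
      unfolding n_zeros_def by (metis (no_types, lifting) card_mono finite_proj mem_Collect_eq subsetI)
    then show "n \<in> {..card (proj_pts m :: (nat \<Rightarrow> 'k) set set)}" by simp
  qed
  then have "finite ?S" using finite_subset by blast
  moreover have "n_zeros r d m F \<in> ?S" using assms by blast
  ultimately show ?thesis unfolding e_max_def by (rule Max_ge)
qed

definition ptv :: "nat \<Rightarrow> nat \<Rightarrow> 'k::field list \<Rightarrow> nat \<Rightarrow> 'k" where
  "ptv k m c = (\<lambda>t. if t < k then 0 else if t = k then 1 else if t \<le> m then c ! (t - Suc k) else 0)"

lemma ptv_inj: "inj_on (ptv k m) {c. length c = m - k}"
proof (rule inj_onI)
  fix c c' assume c: "c \<in> {c. length c = m - k}" "c' \<in> {c. length c = m - k}" "ptv k m c = ptv k m c'"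
  show "c = c'"
  proof (rule nth_equalityI)
    show "length c = length c'" using c by simp
    fix j assume j: "j < length c"
    have "ptv k m c (Suc k + j) = ptv k m c' (Suc k + j)" using c by simp
    moreover have "Suc k + j \<le> m" using j c by simp
    ultimately show "c ! j = c' ! j" unfolding ptv_def by simp
  qed
qed

lemma ptv_props: "k \<le> m \<Longrightarrow> (\<forall>t>m. ptv k m c t = 0) \<and> (\<exists>t\<le>m. ptv k m c t \<noteq> 0) \<and> normd (ptv k m c)"
  unfolding ptv_def normd_def by auto

lemma card_ptv: "k \<le> m \<Longrightarrow> card (ptv k m ` {c :: 'k::{finite,field} list. length c = m - k}) = card (UNIV :: 'k set) ^ (m - k)"
proof -
  have "card (ptv k m ` {c :: 'k list. length c = m - k}) = card {c :: 'k list. length c = m - k}"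
    by (rule card_image[OF ptv_inj])
  also have "\<dots> = card (UNIV :: 'k set) ^ (m - k)" using card_lists_length_eq[of "UNIV :: 'k set" "m - k"] by simp
  finally show ?thesis .
qed

lemma ptv_disj: "k \<noteq> k' \<Longrightarrow> ptv k m c \<noteq> ptv k' m c'"
proof
  assume "k \<noteq> k'" "ptv k m c = ptv k' m c'"
  then have "ptv k m c (min k k') = ptv k' m c' (min k k')" by simp
  then show False using \<open>k \<noteq> k'\<close> unfolding ptv_def by (auto simp: min_def split: if_splits)
qed

lemma pt_ptv: "pt a i m c = ptv i m (map a c)" if "length c = m - i"
  using that unfolding pt_def ptv_def by (auto intro!: ext)



definition Ls :: "nat \<Rightarrow> nat \<Rightarrow> nat list set" where
  "Ls Q n = {c. length c = n \<and> (\<forall>x\<in>set c. x < Q)}"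

lemma card_Ls: "card (Ls Q n) = Q ^ n"
proof -
  have "Ls Q n = {xs. set xs \<subseteq> {..<Q} \<and> length xs = n}" unfolding Ls_def by auto
  then show ?thesis using card_lists_length_eq[of "{..<Q}" n] by simp
qed

lemma finite_Ls: "finite (Ls Q n)"
proof -
  have "Ls Q n = {xs. set xs \<subseteq> {..<Q} \<and> length xs = n}" unfolding Ls_def by auto
  then show ?thesis using finite_lists_length_eq[of "{..<Q}" n] by simp
qed

lemma Ls_Suc: "Ls Q (Suc n) = (\<lambda>(x, c). x # c) ` ({..<Q} \<times> Ls Q n)"
proof (rule set_eqI)
  fix l show "l \<in> Ls Q (Suc n) \<longleftrightarrow> l \<in> (\<lambda>(x, c). x # c) ` ({..<Q} \<times> Ls Q n)"
    unfolding Ls_def by (cases l) auto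
qed

lemma card_lexless:
  assumes "length \<alpha> = n" "\<forall>x\<in>set \<alpha>. x < Q"
  shows "card {c \<in> Ls Q n. c < \<alpha>} = (\<Sum>k<n. \<alpha> ! k * Q ^ (n - 1 - k))"
  using assms
proof (induction \<alpha> arbitrary: n)
  case Nil then show ?case by simp
next
  case (Cons a \<alpha>)
  then obtain n' where n: "n = Suc n'" "length \<alpha> = n'" by auto
  have aQ: "a < Q" "\<forall>x\<in>set \<alpha>. x < Q" using Cons.prems by auto
  let ?A = "(\<lambda>(x, c). x # c) ` ({..<a} \<times> Ls Q n')"
  let ?B = "Cons a ` {c \<in> Ls Q n'. c < \<alpha>}"
  have eq: "{c \<in> Ls Q n. c < a # \<alpha>} = ?A \<union> ?B"
  proof (rule set_eqI)
    fix l show "l \<in> {c \<in> Ls Q n. c < a # \<alpha>} \<longleftrightarrow> l \<in> ?A \<union> ?B"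
      using aQ unfolding n Ls_def by (cases l) auto
  qed
  have inj: "inj_on (\<lambda>(x, c). x # c) X" for X :: "(nat \<times> nat list) set"
    by (rule inj_onI) auto
  have cA: "card ?A = a * Q ^ n'"
    by (simp add: card_image[OF inj] card_cartesian_product card_Ls)
  have cB: "card ?B = (\<Sum>k<n'. \<alpha> ! k * Q ^ (n' - 1 - k))"
    using Cons.IH[OF n(2) aQ(2)] by (simp add: card_image)
  have fin: "finite ?A" "finite ?B"
    by (auto intro!: finite_imageI finite_cartesian_product finite_Ls)
  have disj: "?A \<inter> ?B = {}" by auto
  have "card {c \<in> Ls Q n. c < a # \<alpha>} = card ?A + card ?B"
    using eq fin disj by (simp add: card_Un_disjoint)
  also have "\<dots> = (\<Sum>k<n. (a # \<alpha>) ! k * Q ^ (n - 1 - k))"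
    unfolding cA cB n by (subst sum.lessThan_Suc_shift) simp
  finally show ?case .
qed

lemma cw_le_lex: "length b = length c \<Longrightarrow> \<forall>k<length b. b ! k \<le> c ! k \<Longrightarrow> b \<le> (c :: nat list)"
proof (induction b arbitrary: c)
  case Nil then show ?case by simp
next
  case (Cons x b)
  then obtain y c' where c: "c = y # c'" by (cases c) auto
  have "x \<le> y" using Cons.prems c by force
  moreover have "b \<le> c'" using Cons.prems c by (intro Cons.IH) force+
  ultimately show ?case using c by (auto simp: order.order_iff_strict)
qed

lemma lex_gt_iff: "lex_gt g b \<longleftrightarrow> b < g"
  unfolding lex_gt_def list_less_def by simp

lemma nth_desc_prop:
  assumes fin: "finite (tuples q d n)" and j: "1 \<le> j" "j \<le> card (tuples q d n)"
  shows "nth_desc q d n j \<in> tuples q d n \<and> card {g \<in> tuples q d n. nth_desc q d n j < g} = j - 1"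
proof -
  let ?T = "tuples q d n"
  define f where "f b = card {g \<in> ?T. b < g}" for b
  have mono: "f b' < f b" if "b \<in> ?T" "b' \<in> ?T" "b < b'" for b b'
  proof -
    have "{g \<in> ?T. b' < g} \<subseteq> {g \<in> ?T. b < g}" using that(3) by (blast intro: order.strict_trans)
    moreover have "b' \<in> {g \<in> ?T. b < g}" "b' \<notin> {g \<in> ?T. b' < g}" using that by auto
    ultimately have "{g \<in> ?T. b' < g} \<subset> {g \<in> ?T. b < g}" by blast
    then show ?thesis unfolding f_def using fin by (intro psubset_card_mono) auto
  qed
  have inj: "inj_on f ?T"
  proof (rule inj_onI)
    fix b b' assume "b \<in> ?T" "b' \<in> ?T" "f b = f b'"
    then show "b = b'" using mono by (metis less_irrefl linorder_neqE)
  qed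
  have sub: "f ` ?T \<subseteq> {..<card ?T}"
  proof
    fix y assume "y \<in> f ` ?T"
    then obtain b where b: "b \<in> ?T" "y = f b" by blast
    have "{g \<in> ?T. b < g} \<subseteq> ?T - {b}" by auto
    then have "f b \<le> card (?T - {b})" unfolding f_def using fin by (intro card_mono) auto
    also have "\<dots> < card ?T" using fin b(1) by (meson card_Diff1_less)
    finally show "y \<in> {..<card ?T}" using b by simp
  qed
  have "f ` ?T = {..<card ?T}"
    by (rule card_subset_eq) (use sub inj card_image in auto)
  then have "j - 1 \<in> f ` ?T" using j by auto
  then obtain b where b: "b \<in> ?T" "f b = j - 1" by (metis imageE)
  have uniq: "b' = b" if "b' \<in> ?T \<and> card {g \<in> ?T. lex_gt g b'} = j - 1" for b'
  proof -
    have "f b' = f b" "b' \<in> ?T" using that b unfolding f_def lex_gt_iff by auto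
    then show ?thesis using inj_onD[OF inj] b(1) by blast
  qed
  have "nth_desc q d n j = b"
    unfolding nth_desc_def
  proof (rule the_equality)
    show "b \<in> ?T \<and> card {g \<in> ?T. lex_gt g b} = j - 1" using b unfolding f_def lex_gt_iff by simp
    show "b' = b" if "b' \<in> ?T \<and> card {g \<in> ?T. lex_gt g b'} = j - 1" for b' using uniq that by blast
  qed
  then show ?thesis using b unfolding f_def by simp
qed

lemma card_tuples:
  assumes "e < q"
  shows "card (tuples q e n) = (n + e) choose e"
proof -
  have T: "tuples q e n = {b. length b = n \<and> sum_list b \<le> e}"
    unfolding tuples_def using assms by (auto dest: member_le_sum_list)
  let ?g = "\<lambda>b. b @ [e - sum_list b]"
  have inj: "inj_on ?g {b. length b = n \<and> sum_list b \<le> e}"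
    by (rule inj_onI) auto
  have img: "?g ` {b. length b = n \<and> sum_list b \<le> e} = {l. length l = Suc n \<and> sum_list l = e}"
  proof (rule set_eqI)
    fix l
    show "l \<in> ?g ` {b. length b = n \<and> sum_list b \<le> e} \<longleftrightarrow> l \<in> {l. length l = Suc n \<and> sum_list l = e}"
    proof
      assume "l \<in> ?g ` {b. length b = n \<and> sum_list b \<le> e}"
      then show "l \<in> {l. length l = Suc n \<and> sum_list l = e}" by auto
    next
      assume l: "l \<in> {l. length l = Suc n \<and> sum_list l = e}"
      then have ne: "l \<noteq> []" by auto
      then have l2: "l = butlast l @ [last l]" by simp
      then have "sum_list l = sum_list (butlast l) + last l" by (metis sum_list_append sum_list_simps add_0_right sum_list.Cons sum_list.Nil)
      then have "last l = e - sum_list (butlast l)" "sum_list (butlast l) \<le> e" using l by auto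
      then show "l \<in> ?g ` {b. length b = n \<and> sum_list b \<le> e}"
        using l l2 by (intro image_eqI[of _ _ "butlast l"]) auto
    qed
  qed
  have "card (tuples q e n) = card {l :: nat list. length l = Suc n \<and> sum_list l = e}"
    using T card_image[OF inj] img by simp
  also have "\<dots> = (n + e) choose e" using card_length_sum_list[of "Suc n" e] by (simp add: add.commute)
  finally show ?thesis .
qed

definition Mon :: "nat \<Rightarrow> nat \<Rightarrow> nat \<Rightarrow> (nat \<Rightarrow> nat) set" where
  "Mon lo m d = {a. (\<forall>t. t < lo \<or> m < t \<longrightarrow> a t = 0) \<and> (\<Sum>t\<le>m. a t) = d}"

lemma card_Mon:
  assumes "lo \<le> m"
  shows "card (Mon lo m d) = (d + m - lo) choose d"
proof -
  let ?g = "\<lambda>a. map a [lo..<Suc m]"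
  have inj: "inj_on ?g (Mon lo m d)"
  proof (rule inj_onI)
    fix a a' assume a: "a \<in> Mon lo m d" "a' \<in> Mon lo m d" "?g a = ?g a'"
    show "a = a'"
    proof
      fix t
      show "a t = a' t"
      proof (cases "lo \<le> t \<and> t \<le> m")
        case True
        then have "t \<in> set [lo..<Suc m]" by auto
        then show ?thesis using a(3) by (metis map_eq_conv)
      next
        case False then show ?thesis using a unfolding Mon_def by auto
      qed
    qed
  qed
  have sumeq: "(\<Sum>t\<le>m. a t) = sum_list (?g a)" if "\<forall>t<lo. a t = 0" for a
  proof -
    have "(\<Sum>t\<le>m. a t) = (\<Sum>t\<in>{lo..<Suc m}. a t)"
      by (rule sum.mono_neutral_right) (use that in auto)
    also have "\<dots> = sum_list (?g a)" by (metis sum_set_upt_conv_sum_list_nat set_upt)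
    finally show ?thesis .
  qed
  have img: "?g ` Mon lo m d = {l. length l = Suc m - lo \<and> sum_list l = d}"
  proof (rule set_eqI)
    fix l
    show "l \<in> ?g ` Mon lo m d \<longleftrightarrow> l \<in> {l. length l = Suc m - lo \<and> sum_list l = d}"
    proof
      assume "l \<in> ?g ` Mon lo m d"
      then obtain a where a: "a \<in> Mon lo m d" "l = ?g a" by blast
      then have "\<forall>t<lo. a t = 0" unfolding Mon_def by auto
      from sumeq[OF this] a show "l \<in> {l. length l = Suc m - lo \<and> sum_list l = d}"
        unfolding Mon_def by auto
    next
      assume l: "l \<in> {l. length l = Suc m - lo \<and> sum_list l = d}"
      define a where "a t = (if lo \<le> t \<and> t \<le> m then l ! (t - lo) else 0)" for t
      have ga: "?g a = l"
      proof (rule nth_equalityI)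
        show "length (?g a) = length l" using l assms by simp
        fix k assume "k < length (?g a)"
        then have k: "k < Suc m - lo" by (simp del: upt_Suc)
        then have "?g a ! k = a (lo + k)" by (simp del: upt_Suc add: nth_upt)
        moreover have "lo + k \<le> m" using k assms by arith
        ultimately show "?g a ! k = l ! k" by (simp add: a_def)
      qed
      have z: "\<forall>t. t < lo \<or> m < t \<longrightarrow> a t = 0" by (simp add: a_def)
      then have "\<forall>t<lo. a t = 0" by blast
      from sumeq[OF this] have "(\<Sum>t\<le>m. a t) = d" using ga l by simp
      then have "a \<in> Mon lo m d" unfolding Mon_def using z by blast
      then show "l \<in> ?g ` Mon lo m d" using ga by force
    qed
  qed
  have "card (Mon lo m d) = card {l :: nat list. length l = Suc m - lo \<and> sum_list l = d}"
    using card_image[OF inj] img by simp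
  also have "\<dots> = (d + m - lo) choose d" using card_length_sum_list[of "Suc m - lo" d] assms
    by (simp add: Suc_diff_le)
  finally show ?thesis .
qed

lemma mons_Mon: "mons m d = Mon 0 m d"
  unfolding mons_def Mon_def by auto

lemma finite_Mon: "finite (Mon lo m d)"
proof -
  have "Mon lo m d \<subseteq> mons m d" unfolding mons_def Mon_def by auto
  then show ?thesis using finite_mons finite_subset by blast
qed

lemma hockey:
  assumes "d \<ge> 1" "i \<le> Suc m"
  shows "(\<Sum>a=1..i. (m + d - a) choose (d - 1)) + ((m + d - i) choose d) = (m + d) choose d"
  using assms(2)
proof (induction i)
  case 0 then show ?case by simp
next
  case (Suc i)
  obtain d' where d: "d = Suc d'" using assms(1) by (cases d) auto
  have "m + d - i = Suc (m + d - Suc i)" using Suc.prems d by simp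
  then have "(m + d - i) choose d = ((m + d - Suc i) choose d') + ((m + d - Suc i) choose d)"
    using d by simp
  then show ?case using Suc by (simp add: d)
qed



lemma cw_sum: "length b = length c \<Longrightarrow> \<forall>k<length b. b ! k \<le> (c ! k :: nat) \<Longrightarrow>
   sum_list b \<le> sum_list c \<and> (sum_list b = sum_list c \<longrightarrow> b = c)"
proof (induction b arbitrary: c)
  case Nil then show ?case by simp
next
  case (Cons x b)
  then obtain y c' where c: "c = y # c'" by (cases c) auto
  have "x \<le> y" using Cons.prems c by force
  moreover have "sum_list b \<le> sum_list c' \<and> (sum_list b = sum_list c' \<longrightarrow> b = c')"
    using Cons.prems c by (intro Cons.IH) force+
  ultimately show ?case using c by auto
qed

lemma sum_split_nat: "(\<Sum>l<B + N. (f l :: 'a::comm_monoid_add)) = (\<Sum>l<B. f l) + (\<Sum>s<N. f (B + s :: nat))"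
  by (induction N) (auto simp: add.assoc)

lemma peval_lin: "peval m d (\<lambda>b. \<Sum>l<r. cs l * F l b) x = (\<Sum>l<r. cs l * peval m d (F l) x)"
  unfolding peval_def by (simp add: sum_distrib_right sum_distrib_left mult.assoc sum.swap[of _ "{..<r}"])

lemma finite_tuples: "finite (tuples q e n)"
proof -
  have "tuples q e n \<subseteq> Ls q n" unfolding tuples_def Ls_def by auto
  then show ?thesis using finite_Ls finite_subset by blast
qed

lemma finite_klists: "finite {c :: 'k::finite list. length c = N}"
  using finite_lists_length_eq[of "UNIV :: 'k set" N] by simp

lemma core:
  fixes a :: "nat \<Rightarrow> 'k::{finite,field}"
  assumes q: "q = card (UNIV :: 'k set)" and bij: "bij_betw a {..<q} UNIV"
    and d1: "1 \<le> d" and im: "i \<le> m"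
    and S: "S \<subseteq> tuples q (d - 1) (m - i)"
    and C: "C \<subseteq> Ls q (m - i)"
    and zc: "\<forall>c\<in>C. \<forall>\<beta>\<in>S. \<exists>k<m - i. c ! k < \<beta> ! k"
    and r: "r = card (mons m d - Mon i m d) + card S"
  shows "card C + (\<Sum>e<m - i. q ^ e) \<le> e_max TYPE('k) r d m"
proof -
  define n where "n = m - i"
  define MB where "MB = mons m d - Mon i m d"
  define B where "B = card MB"
  have finMB: "finite MB" unfolding MB_def using finite_mons by simp
  have finS: "finite S" using S finite_tuples finite_subset by blast
  obtain \<mu> where \<mu>: "bij_betw \<mu> {0..<B} MB" using ex_bij_betw_nat_finite[OF finMB] B_def by blast
  obtain bs where bs: "bij_betw bs {0..<card S} S" using ex_bij_betw_nat_finite[OF finS] by blast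
  have inja: "inj_on a {..<q}" using bij bij_betw_def by blast
  have MBi: "\<exists>t<i. \<mu> l t \<noteq> 0" if "l < B" for l
  proof -
    have "\<mu> l \<in> MB" using \<mu> that bij_betwE by fastforce
    then show ?thesis unfolding MB_def mons_def Mon_def by auto
  qed
  have MBm: "\<mu> l \<in> mons m d" if "l < B" for l
    using \<mu> that bij_betwE unfolding MB_def by fastforce
  have bsS: "bs s \<in> S" if "s < card S" for s using bs that bij_betwE by fastforce
  have Stup: "length \<beta> = n \<and> (\<forall>x\<in>set \<beta>. x < q) \<and> sum_list \<beta> \<le> d - 1" if "\<beta> \<in> S" for \<beta>
    using S that unfolding tuples_def n_def by auto
  define Gc where "Gc \<beta> = (SOME c. c \<in> hom_polys m d \<and> (\<forall>x. peval m d c x = Gfun a i d \<beta> x))" for \<beta>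
  have Gc: "Gc \<beta> \<in> hom_polys m d \<and> (\<forall>x. peval m d (Gc \<beta>) x = Gfun a i d \<beta> x)" if "\<beta> \<in> S" for \<beta>
  proof -
    have "repr m d (Gfun a i d \<beta>)" using Stup[OF that] im n_def by (intro repr_G) auto
    then have "\<exists>c. c \<in> hom_polys m d \<and> (\<forall>x. peval m d c x = Gfun a i d \<beta> x)"
      unfolding repr_def by blast
    then show ?thesis unfolding Gc_def by (rule someI_ex)
  qed
  define F where "F l = (if l < B then (\<lambda>b. if b = \<mu> l then 1 else 0) else Gc (bs (l - B)))" for l
  have rB: "r = B + card S" using r B_def MB_def by simp
  have pevF1: "peval m d (F l) x = monom m (\<mu> l) x" if "l < B" for l x
    using that peval_delta[OF MBm[OF that]] unfolding F_def by simp
  have pevF2: "peval m d (F (B + s)) x = Gfun a i d (bs s) x" if "s < card S" for s x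
    using that Gc bsS unfolding F_def by simp
  have mon0: "monom m (\<mu> l) x = 0" if lB: "l < B" and xz: "\<forall>t<i. x t = 0" for l x
  proof -
    obtain t where "t < i" "\<mu> l t \<noteq> 0" using MBi[OF lB] by blast
    then show ?thesis unfolding monom_def using xz im
      by (intro prod_zero) (auto intro!: bexI[of _ t])
  qed
  have hom: "\<forall>l<r. F l \<in> hom_polys m (d :: nat)"
  proof (intro allI impI)
    fix l assume "l < r"
    show "F l \<in> hom_polys m d"
    proof (cases "l < B")
      case True then show ?thesis unfolding F_def using delta_hom[OF MBm[OF True]] by simp
    next
      case False
      then have "l - B < card S" using \<open>l < r\<close> rB by simp
      then show ?thesis unfolding F_def using False Gc bsS by simp
    qed
  qed
  have li: "lin_indep r F"
    unfolding lin_indep_def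
  proof (intro allI impI)
    fix cs :: "nat \<Rightarrow> 'k" and l
    assume z: "\<forall>b. (\<Sum>l<r. cs l * F l b) = 0" and l: "l < r"
    have ev: "(\<Sum>l<r. cs l * peval m d (F l) x) = 0" for x
    proof -
      have "(\<lambda>b. \<Sum>l<r. cs l * F l b) = (\<lambda>b. 0)" using z by auto
      then have "peval m d (\<lambda>b. \<Sum>l<r. cs l * F l b) x = 0" by (simp add: peval_def)
      then show ?thesis by (simp add: peval_lin)
    qed
    have ev2: "(\<Sum>s<card S. cs (B + s) * Gfun a i d (bs s) (pt a i m c)) = 0" if "c \<in> Ls q n" for c
    proof -
      have pz: "\<forall>t<i. pt a i m c t = 0" by (simp add: pt_def)
      have "(\<Sum>l<B. cs l * peval m d (F l) (pt a i m c)) = 0"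
        by (rule sum.neutral) (simp add: pevF1 mon0[OF _ pz])
      then show ?thesis using ev[of "pt a i m c"] unfolding rB sum_split_nat
        by (simp add: pevF2)
    qed
    have Gz: "cs (B + s) = 0" if "s < card S" for s
    proof (rule ccontr)
      assume "cs (B + s) \<noteq> 0"
      define P where "P v = (\<exists>s<card S. cs (B + s) \<noteq> 0 \<and> sum_list (bs s) = v)" for v
      have "P (sum_list (bs s))" using that \<open>cs (B + s) \<noteq> 0\<close> P_def by blast
      then have "P (LEAST v. P v)" by (rule LeastI)
      then obtain s0 where s0: "s0 < card S" "cs (B + s0) \<noteq> 0" "sum_list (bs s0) = (LEAST v. P v)"
        unfolding P_def by blast
      have mins: "sum_list (bs s0) \<le> sum_list (bs s')" if "s' < card S" "cs (B + s') \<noteq> 0" for s'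
      proof -
        have "P (sum_list (bs s'))" unfolding P_def using that by blast
        then show ?thesis using s0(3) Least_le[of P "sum_list (bs s')"] by simp
      qed
      let ?c = "bs s0"
      have cL: "?c \<in> Ls q n" using Stup[OF bsS[OF s0(1)]] unfolding Ls_def by auto
      have other: "cs (B + s') * Gfun a i d (bs s') (pt a i m ?c) = 0" if "s' < card S" "s' \<noteq> s0" for s'
      proof (cases "cs (B + s') = 0")
        case False
        have st: "length (bs s') = n" "\<forall>x\<in>set (bs s'). x < q" "length ?c = n" "\<forall>x\<in>set ?c. x < q"
          using Stup[OF bsS[OF that(1)]] Stup[OF bsS[OF s0(1)]] by auto
        have "\<exists>k<n. ?c ! k < bs s' ! k"
        proof (rule ccontr)
          assume "\<not> (\<exists>k<n. ?c ! k < bs s' ! k)"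
          then have "\<forall>k<length (bs s'). bs s' ! k \<le> ?c ! k" using st by auto
          from cw_sum[OF _ this] st mins[OF that(1) False]
          have "bs s' = ?c" by auto
          then have "s' = s0" using bs that(1) s0(1) unfolding bij_betw_def by (auto dest: inj_onD)
          then show False using that by simp
        qed
        then have "Gfun a i d (bs s') (pt a i m ?c) = 0"
          using G_pt[OF inja im] st unfolding n_def by auto
        then show ?thesis by simp
      qed simp
      have self: "Gfun a i d ?c (pt a i m ?c) \<noteq> 0"
      proof -
        have st: "length ?c = n" "\<forall>x\<in>set ?c. x < q" using Stup[OF bsS[OF s0(1)]] by auto
        then show ?thesis using G_pt[OF inja im] unfolding n_def by auto
      qed
      have "(\<Sum>s<card S. cs (B + s) * Gfun a i d (bs s) (pt a i m ?c)) = cs (B + s0) * Gfun a i d ?c (pt a i m ?c)"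
      proof -
        have "(\<Sum>s\<in>{..<card S} - {s0}. cs (B + s) * Gfun a i d (bs s) (pt a i m ?c)) = 0"
          by (rule sum.neutral) (use other in blast)
        moreover have "s0 \<in> {..<card S}" using s0(1) by simp
        ultimately show ?thesis using sum.remove[of "{..<card S}" s0 "\<lambda>s. cs (B + s) * Gfun a i d (bs s) (pt a i m ?c)"] by simp
      qed
      then show False using ev2[OF cL] s0(2) self by simp
    qed
    show "cs l = 0"
    proof (cases "l < B")
      case False
      then show ?thesis using Gz[of "l - B"] l rB by simp
    next
      case True
      have "(\<Sum>l'<r. cs l' * F l' (\<mu> l)) = cs l"
      proof -
        have "(\<Sum>l'<r. cs l' * F l' (\<mu> l)) = (\<Sum>l'<B. cs l' * F l' (\<mu> l))"
          unfolding rB sum_split_nat using Gz by simp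
        also have "\<dots> = (\<Sum>l'<B. if l' = l then cs l' else 0)"
        proof (rule sum.cong[OF refl])
          fix l' assume "l' \<in> {..<B}"
          then have "\<mu> l = \<mu> l' \<longleftrightarrow> l = l'" using True \<mu> unfolding bij_betw_def by (auto dest: inj_onD)
          then show "cs l' * F l' (\<mu> l) = (if l' = l then cs l' else 0)"
            using \<open>l' \<in> {..<B}\<close> unfolding F_def by auto
        qed
        also have "\<dots> = cs l" using True by simp
        finally show ?thesis .
      qed
      then show ?thesis using z by simp
    qed
  qed
  define V1 where "V1 = (\<Union>k\<in>{i<..m}. ptv k m ` {c :: 'k list. length c = m - k})"
  define V2 where "V2 = pt a i m ` C"
  have Vprops: "(\<forall>t>m. x t = 0) \<and> (\<exists>t\<le>m. x t \<noteq> 0) \<and> normd x \<and> (\<forall>l<r. peval m d (F l) x = 0)"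
    if xV: "x \<in> V1 \<union> V2" for x
  proof -
    obtain k c where kc: "x = ptv k m c" "i \<le> k" "k \<le> m" "k = i \<longrightarrow> (\<exists>c'\<in>C. c = map a c')"
      "i < k \<longrightarrow> x i = 0"
    proof -
      consider "x \<in> V1" | "x \<in> V2" using xV by blast
      then show ?thesis
      proof cases
        case 1
        then obtain k c where "k \<in> {i<..m}" "x = ptv k m c" unfolding V1_def by blast
        then show ?thesis by (intro that[of k c]) (auto simp: ptv_def)
      next
        case 2
        then obtain c' where c': "c' \<in> C" "x = pt a i m c'" unfolding V2_def by blast
        then have "length c' = m - i" using C Ls_def by auto
        then have "x = ptv i m (map a c')" using c' pt_ptv by metis
        then show ?thesis using c' im by (intro that[of i "map a c'"]) auto
      qed
    qed
    have below: "\<forall>t<i. x t = 0" using kc(1,2) unfolding ptv_def by simp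
    have pz: "peval m d (F l) x = 0" if lr: "l < r" for l
    proof (cases "l < B")
      case True then show ?thesis using pevF1[OF True] mon0[OF True below] by simp
    next
      case False
      define s where "s = l - B"
      have s: "s < card S" "l = B + s" using lr False rB unfolding s_def by auto
      have st: "length (bs s) = n" "\<forall>x\<in>set (bs s). x < q" "sum_list (bs s) \<le> d - 1"
        using Stup[OF bsS[OF s(1)]] by auto
      show ?thesis
      proof (cases "k = i")
        case True
        then obtain c' where c': "c' \<in> C" "c = map a c'" using kc(4) by blast
        have cL: "length c' = m - i" "\<forall>x\<in>set c'. x < q" using c'(1) C unfolding Ls_def by auto
        have xpt: "x = pt a i m c'" using kc(1) True c'(2) by (simp add: pt_ptv[OF cL(1)])
        have ex: "\<exists>k<m - i. c' ! k < bs s ! k" using zc c'(1) bsS[OF s(1)] by blast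
        have "Gfun a i d (bs s) x = 0"
          unfolding xpt using G_pt[OF inja im cL st(1)[unfolded n_def] st(2)] ex by blast
        then show ?thesis using pevF2[OF s(1)] s(2) by simp
      next
        case False
        then have "x i = 0" using kc(2,5) by simp
        moreover have "sum_list (bs s) < d" using st(3) d1 by simp
        ultimately have "Gfun a i d (bs s) x = 0" by (rule G_hyper)
        then show ?thesis using pevF2[OF s(1)] s(2) by simp
      qed
    qed
    then show ?thesis using ptv_props[OF kc(3)] kc(1) by simp
  qed
  have finV1: "finite V1" unfolding V1_def by (auto intro!: finite_imageI simp: finite_klists)
  have cV1: "card V1 = (\<Sum>e<n. q ^ e)"
  proof -
    have "card V1 = (\<Sum>k\<in>{i<..m}. card (ptv k m ` {c :: 'k list. length c = m - k}))"
      unfolding V1_def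
      by (rule card_UN_disjoint) (auto simp: finite_klists dest: ptv_disj)
    also have "\<dots> = (\<Sum>k\<in>{i<..m}. q ^ (m - k))" by (rule sum.cong[OF refl]) (simp add: card_ptv q)
    also have "\<dots> = (\<Sum>e<n. q ^ e)"
      by (rule sum.reindex_bij_witness[of _ "\<lambda>e. m - e" "\<lambda>k. m - k"]) (auto simp: n_def)
    finally show ?thesis .
  qed
  have injpt: "inj_on (pt a i m) C"
  proof (rule inj_onI)
    fix c c' assume cc: "c \<in> C" "c' \<in> C" "pt a i m c = pt a i m c'"
    then have L: "length c = m - i" "length c' = m - i" using C Ls_def by auto
    then have "map a c = map a c'" using cc(3) ptv_inj[of i m] by (auto simp: pt_ptv dest: inj_onD)
    moreover have "set c \<union> set c' \<subseteq> {..<q}" using cc C Ls_def by auto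
    ultimately show "c = c'" using inj_on_map_eq_map inja inj_on_subset by blast
  qed
  have finC: "finite C" using C finite_Ls finite_subset by blast
  have cV2: "card V2 = card C" unfolding V2_def using card_image[OF injpt] .
  have "x i = 0" if "x \<in> V1" for x
    using that unfolding V1_def by (auto simp: ptv_def)
  moreover have "x i = 1" if "x \<in> V2" for x
    using that unfolding V2_def by (auto simp: pt_def)
  ultimately have disj: "V1 \<inter> V2 = {}" by fastforce
  have "card C + (\<Sum>e<m - i. q ^ e) = card (V1 \<union> V2)"
    using card_Un_disjoint[OF finV1 _ disj] finC cV1 cV2 n_def V2_def by simp
  also have "\<dots> \<le> n_zeros r d m F" by (rule nz_lower) (use Vprops in blast)
  also have "\<dots> \<le> e_max TYPE('k) r d m" by (rule emax_lower[OF hom li])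
  finally show ?thesis .
qed



theorem theorem5p10:
  fixes d r m :: nat
  defines "q \<equiv> card (UNIV :: ('k::{finite,field}) set)"
  assumes "m \<ge> 1" "d \<ge> 1" "r \<ge> 1" "d \<le> q" "r \<le> (m + d) choose d"
  shows "(r < (m + d) choose d \<longrightarrow>
           (\<exists>i j. r = j + (\<Sum>a=1..i. (m + d - a) choose (d - 1)) \<and> i \<le> m
                  \<and> j < (m + d - i - 1) choose (d - 1)) \<and>
           (\<forall>i j. r = j + (\<Sum>a=1..i. (m + d - a) choose (d - 1)) \<and> i \<le> m
                  \<and> j < (m + d - i - 1) choose (d - 1) \<longrightarrow>
              e_max TYPE('k) r d m \<ge> H q j (d - 1) (m - i) + pp q (int m - int i - 1)))
       \<and> (r = (m + d) choose d \<longrightarrow>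
              e_max TYPE('k) r d m \<ge> H q 1 (d - 1) (m - m) + pp q (int m - int m - 1))"
proof -
  note d1 = assms(3) and dq = assms(5)
  obtain a :: "nat \<Rightarrow> 'k" where bij: "bij_betw a {..<q} UNIV"
    using ex_bij_betw_nat_finite[of "UNIV :: 'k set"] unfolding q_def
    by (auto simp: atLeast0LessThan)
  define s where "s i = (\<Sum>a=1..i. (m + d - a) choose (d - 1))" for i
  have hock: "s i + ((m + d - i) choose d) = (m + d) choose d" if "i \<le> Suc m" for i
    unfolding s_def using hockey[OF d1 that] .
  have sSuc: "s (Suc i) = s i + ((m + d - i - 1) choose (d - 1))" for i
    unfolding s_def by simp
  have part1: "(\<exists>i j. r = j + s i \<and> i \<le> m \<and> j < (m + d - i - 1) choose (d - 1)) \<and>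
           (\<forall>i j. r = j + s i \<and> i \<le> m \<and> j < (m + d - i - 1) choose (d - 1) \<longrightarrow>
              e_max TYPE('k) r d m \<ge> H q j (d - 1) (m - i) + pp q (int m - int i - 1))"
    if rlt: "r < (m + d) choose d"
  proof
    have ex: "\<forall>r. r < s k \<longrightarrow> (\<exists>i<k. s i \<le> r \<and> r < s (Suc i))" for k
    proof (induction k)
      case 0 then show ?case by (simp add: s_def)
    next
      case (Suc k)
      show ?case
      proof (intro allI impI)
        fix r assume "r < s (Suc k)"
        show "\<exists>i<Suc k. s i \<le> r \<and> r < s (Suc i)"
        proof (cases "r < s k")
          case True then show ?thesis using Suc.IH less_SucI by blast
        next
          case False then show ?thesis using \<open>r < s (Suc k)\<close> by (intro exI[of _ k]) auto
        qed
      qed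
    qed
    have "s (Suc m) = (m + d) choose d" using hock[of "Suc m"] d1 by (simp add: binomial_eq_0)
    then obtain i where i: "i < Suc m" "s i \<le> r" "r < s (Suc i)" using ex[of "Suc m"] rlt by auto
    show "\<exists>i j. r = j + s i \<and> i \<le> m \<and> j < (m + d - i - 1) choose (d - 1)"
      using i sSuc[of i] by (intro exI[of _ i] exI[of _ "r - s i"]) auto
  next
    show "\<forall>i j. r = j + s i \<and> i \<le> m \<and> j < (m + d - i - 1) choose (d - 1) \<longrightarrow>
              e_max TYPE('k) r d m \<ge> H q j (d - 1) (m - i) + pp q (int m - int i - 1)"
    proof (intro allI impI)
      fix i j assume ij: "r = j + s i \<and> i \<le> m \<and> j < (m + d - i - 1) choose (d - 1)"
      then have im: "i \<le> m" and rj: "r = j + s i" and jlt: "j < (m + d - i - 1) choose (d - 1)" by auto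
      define n where "n = m - i"
      have Bc: "card (mons m d - Mon i m d) = s i"
      proof -
        have sub: "Mon i m d \<subseteq> mons m d" unfolding mons_def Mon_def by auto
        have "card (mons m d - Mon i m d) = card (mons m d) - card (Mon i m d)"
          using card_Diff_subset[OF finite_Mon sub] .
        also have "\<dots> = ((m + d) choose d) - ((m + d - i) choose d)"
          using card_Mon[of 0 m d] card_Mon[OF im, of d] by (simp add: mons_Mon add.commute)
        also have "\<dots> = s i" using hock[of i] im by simp
        finally show ?thesis .
      qed
      have ppe: "pp q (int m - int i - 1) = (\<Sum>e<n. q ^ e)"
      proof (cases "i = m")
        case True then show ?thesis by (simp add: pp_def n_def)
      next
        case False
        then have "nat (int m - int i - 1) = n - 1" "n \<ge> 1" using im by (auto simp: n_def)
        then show ?thesis unfolding pp_def using False im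
          by (simp add: lessThan_Suc_atMost[symmetric])
      qed
      have qpos: "q = card (UNIV :: 'k set)" by (simp add: q_def)
      show "e_max TYPE('k) r d m \<ge> H q j (d - 1) (m - i) + pp q (int m - int i - 1)"
      proof (cases "j = 0")
        case True
        have "card (Ls q n) + (\<Sum>e<m - i. q ^ e) \<le> e_max TYPE('k) r d m"
          by (rule core[OF qpos bij d1 im, of "{}"]) (use rj True Bc n_def in auto)
        then show ?thesis using True ppe card_Ls[of q n] by (simp add: H_def n_def)
      next
        case False
        have d2: "d \<ge> 2"
        proof (rule ccontr)
          assume "\<not> d \<ge> 2" then have "d = 1" using d1 by simp
          then show False using jlt False by simp
        qed
        have n1: "n \<ge> 1"
        proof (rule ccontr)
          assume "\<not> n \<ge> 1" then have "i = m" using im n_def by simp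
          then show False using jlt False by simp
        qed
        define T where "T = tuples q (d - 1) n"
        have cT: "card T = (n + (d - 1)) choose (d - 1)"
          unfolding T_def by (rule card_tuples) (use dq d1 in simp)
        have "m + d - i - 1 = n + (d - 1)" using im d1 n_def by simp
        then have jT: "j \<le> card T" using jlt cT by simp
        define \<alpha> where "\<alpha> = nth_desc q (d - 1) n j"
        have \<alpha>: "\<alpha> \<in> T" "card {g \<in> T. \<alpha> < g} = j - 1"
          using nth_desc_prop[OF finite_tuples, of j q "d - 1" n] False jT unfolding T_def \<alpha>_def by auto
        define S where "S = insert \<alpha> {g \<in> T. \<alpha> < g}"
        have cS: "card S = j"
        proof -
          have "finite {g \<in> T. \<alpha> < g}" using finite_tuples T_def by simp
          then have "card S = Suc (card {g \<in> T. \<alpha> < g})" unfolding S_def by (simp add: card_insert_if)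
          then show ?thesis using \<alpha>(2) False by simp
        qed
        have \<alpha>t: "length \<alpha> = n" "\<forall>x\<in>set \<alpha>. x < q" using \<alpha>(1) unfolding T_def tuples_def by auto
        define C where "C = {c \<in> Ls q n. c < \<alpha>}"
        have cC: "card C = (\<Sum>k<n. \<alpha> ! k * q ^ (n - 1 - k))"
          unfolding C_def by (rule card_lexless[OF \<alpha>t])
        have Hj: "H q j (d - 1) n = (\<Sum>k<n. \<alpha> ! k * q ^ (n - 1 - k))"
          unfolding H_def \<alpha>_def using False d2 n1 by (simp add: Let_def)
        have zc: "\<forall>c\<in>C. \<forall>\<beta>\<in>S. \<exists>k<m - i. c ! k < \<beta> ! k"
        proof (intro ballI)
          fix c \<beta> assume c: "c \<in> C" and b: "\<beta> \<in> S"
          show "\<exists>k<m - i. c ! k < \<beta> ! k"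
          proof (rule ccontr)
            assume "\<not> (\<exists>k<m - i. c ! k < \<beta> ! k)"
            then have le: "\<forall>k<length \<beta>. \<beta> ! k \<le> c ! k"
              using b \<alpha>(1) unfolding S_def T_def tuples_def n_def by auto
            have "length \<beta> = length c" using b c \<alpha>(1) unfolding S_def T_def tuples_def C_def Ls_def by auto
            from cw_le_lex[OF this le] have "\<beta> \<le> c" .
            moreover have "c < \<alpha>" using c C_def by simp
            moreover have "\<alpha> \<le> \<beta>" using b S_def by auto
            ultimately show False by simp
          qed
        qed
        have "card C + (\<Sum>e<m - i. q ^ e) \<le> e_max TYPE('k) r d m"
        proof (rule core[OF qpos bij d1 im, of S])
          show "S \<subseteq> tuples q (d - 1) (m - i)" using \<alpha>(1) unfolding S_def T_def n_def by auto
          show "C \<subseteq> Ls q (m - i)" unfolding C_def n_def by auto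
          show "\<forall>c\<in>C. \<forall>\<beta>\<in>S. \<exists>k<m - i. c ! k < \<beta> ! k" by (rule zc)
          show "r = card (mons m d - Mon i m d) + card S" using rj Bc cS by simp
        qed
        then show ?thesis using cC Hj ppe n_def by simp
      qed
    qed
  qed
  have part2: "H q 1 (d - 1) (m - m) + pp q (int m - int m - 1) = 0"
    by (simp add: H_def pp_def)
  show ?thesis using part1 part2 unfolding s_def by simp
qed


end
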